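(* Let $1<\beta<\gamma<p^-$ and, for $\lambda>0$, let $I_\lambda:E\to\mathbb{R}$, $I_\lambda(u)=\int_\Omega A(x,\nabla u)\,dx-\frac{\lambda}{\gamma}\int_\Omega u_+^\gamma\,dx+\frac{\lambda}{\beta}\int_\Omega u_+^\beta\,dx$ with $u_+=\max\{u,0\}$. There exists $\lambda^\star>0$ such that $\inf_E I_\lambda<0$ for all $\lambda\geq\lambda^\star$.
   Context: Standing setting: $\Omega\subset\mathbb{R}^N$ ($N\geq3$) is a bounded domain with smooth boundary; $p\in C^{0,\alpha}(\overline\Omega)$, $\alpha\in(0,1)$, $p(x)>1$ on $\overline\Omega$; $p^+=\sup_\Omega p$, $p^-=\inf_\Omega p$. $L^{p(x)}(\Omega)$ is the space of measurable $u$ with $\int_\Omega|u|^{p(x)}dx<\infty$, normed by $|u|_{p(x)}=\inf\{\mu>0:\int_\Omega|u/\mu|^{p(x)}dx\leq1\}$; $E=W_0^{1,p(x)}(\Omega)$ is the closure of $C_0^\infty(\Omega)$ under $\|u\|=|\nabla u|_{p(x)}$. $A:\overline\Omega\times\mathbb{R}^N\to\mathbb{R}$ has continuous derivative $a(x,\xi)=\frac{d}{d\xi}A(x,\xi)$ and satisfies: (A1) $A(x,0)=0$; (A2) $|a(x,\xi)|\leq c_1(1+|\xi|^{p(x)-1})$ for some $c_1>0$; (A3) $(a(x,\xi)-a(x,\psi))\cdot(\xi-\psi)\geq0$ with equality iff $\xi=\psi$; (A4) $A(x,\frac{\xi+\psi}2)\leq\frac12A(x,\xi)+\frac12A(x,\psi)-k|\xi-\psi|^{p(x)}$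 for some $k>0$; (A5) $|\xi|^{p(x)}\leq a(x,\xi)\cdot\xi\leq p(x)A(x,\xi)$; all for every $x\in\overline\Omega$, $\xi,\psi\in\mathbb{R}^N$. *)

theory Defs
  imports "HOL-Analysis.Analysis"
begin

primrec dpart :: "'a::euclidean_space list \<Rightarrow> ('a \<Rightarrow> real) \<Rightarrow> 'a \<Rightarrow> real" where
  "dpart [] f = f"
| "dpart (d # ds) f = (\<lambda>x. frechet_derivative (dpart ds f) (at x) d)"

definition smooth_on :: "'a::euclidean_space set \<Rightarrow> ('a \<Rightarrow> real) \<Rightarrow> bool" where
  "smooth_on S f \<longleftrightarrow> open S \<and>
     (\<forall>ds. set ds \<subseteq> Basis \<longrightarrow> (\<forall>x\<in>S. dpart ds f differentiable (at x)))"

definition grad :: "('a::euclidean_space \<Rightarrow> real) \<Rightarrow> 'a \<Rightarrow> 'a" where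
  "grad f x = (\<Sum>i\<in>Basis. frechet_derivative f (at x) i *\<^sub>R i)"

text \<open>Test functions C_c^infinity(Omega) (extended by zero to the whole space).\<close>
definition test_fun :: "'a::euclidean_space set \<Rightarrow> ('a \<Rightarrow> real) \<Rightarrow> bool" where
  "test_fun \<Omega> \<phi> \<longleftrightarrow> smooth_on UNIV \<phi> \<and>
     compact (closure {x. \<phi> x \<noteq> 0}) \<and> closure {x. \<phi> x \<noteq> 0} \<subseteq> \<Omega>"

definition smooth_bounded_domain :: "'a::euclidean_space set \<Rightarrow> bool" where
  "smooth_bounded_domain \<Omega> \<longleftrightarrow> \<Omega> \<noteq> {} \<and> open \<Omega> \<and> bounded \<Omega> \<and> connected \<Omega> \<and>
     (\<forall>z\<in>frontier \<Omega>. \<exists>r>0. \<exists>\<psi>. smooth_on (ball z r) \<psi> \<and>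
        (\<forall>x\<in>ball z r. grad \<psi> x \<noteq> 0) \<and>
        \<Omega> \<inter> ball z r = {x\<in>ball z r. \<psi> x < 0})"

definition modular :: "('a::euclidean_space \<Rightarrow> real) \<Rightarrow> 'a set \<Rightarrow> ('a \<Rightarrow> real) \<Rightarrow> ennreal" where
  "modular p \<Omega> u = (\<integral>\<^sup>+ x\<in>\<Omega>. ennreal (\<bar>u x\<bar> powr p x) \<partial>lebesgue)"

definition in_Lp :: "('a::euclidean_space \<Rightarrow> real) \<Rightarrow> 'a set \<Rightarrow> ('a \<Rightarrow> real) \<Rightarrow> bool" where
  "in_Lp p \<Omega> u \<longleftrightarrow> u \<in> borel_measurable lebesgue \<and> modular p \<Omega> u < \<infinity>"

definition lux_norm :: "('a::euclidean_space \<Rightarrow> real) \<Rightarrow> 'a set \<Rightarrow> ('a \<Rightarrow> real) \<Rightarrow> real" where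
  "lux_norm p \<Omega> u = Inf {\<mu>. \<mu> > 0 \<and> modular p \<Omega> (\<lambda>x. u x / \<mu>) \<le> 1}"

text \<open>in_E p Omega u g: u belongs to the closure of C_c^infinity(Omega) in W^{1,p(x)}, with
  (weak) gradient g; i.e. there are test functions phi_k with phi_k -> u and
  grad phi_k -> g in L^{p(x)}(Omega).\<close>
definition in_E :: "('a::euclidean_space \<Rightarrow> real) \<Rightarrow> 'a set \<Rightarrow> ('a \<Rightarrow> real) \<Rightarrow> ('a \<Rightarrow> 'a) \<Rightarrow> bool" where
  "in_E p \<Omega> u g \<longleftrightarrow> in_Lp p \<Omega> u \<and> g \<in> borel_measurable lebesgue \<and>
     in_Lp p \<Omega> (\<lambda>x. norm (g x)) \<and>
     (\<exists>\<phi>::nat \<Rightarrow> 'a \<Rightarrow> real. (\<forall>k. test_fun \<Omega> (\<phi> k)) \<and>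
        (\<lambda>k. lux_norm p \<Omega> (\<lambda>x. \<phi> k x - u x)) \<longlonglongrightarrow> 0 \<and>
        (\<lambda>k. lux_norm p \<Omega> (\<lambda>x. norm (grad (\<phi> k) x - g x))) \<longlonglongrightarrow> 0)"

definition I_fun :: "('a::euclidean_space \<Rightarrow> 'a \<Rightarrow> real) \<Rightarrow> 'a set \<Rightarrow> real \<Rightarrow> real \<Rightarrow> real
    \<Rightarrow> ('a \<Rightarrow> real) \<Rightarrow> ('a \<Rightarrow> 'a) \<Rightarrow> real" where
  "I_fun A \<Omega> \<beta> \<gamma> lam u g =
     (LINT x:\<Omega>|lebesgue. A x (g x))
     - lam / \<gamma> * (LINT x:\<Omega>|lebesgue. (max (u x) 0) powr \<gamma>)
     + lam / \<beta> * (LINT x:\<Omega>|lebesgue. (max (u x) 0) powr \<beta>)"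

end

theory Submission
  imports Defs "HOL-Computational_Algebra.Polynomial"
begin


inductive sm :: "('a::euclidean_space \<Rightarrow> real) \<Rightarrow> bool" where
  sm_const: "sm (\<lambda>x. c)"
| sm_inner: "sm (\<lambda>x. x \<bullet> b)"
| sm_sq: "sm (\<lambda>x. x \<bullet> x)"
| sm_add: "sm f \<Longrightarrow> sm g \<Longrightarrow> sm (\<lambda>x. f x + g x)"
| sm_mult: "sm f \<Longrightarrow> sm g \<Longrightarrow> sm (\<lambda>x. f x * g x)"
| sm_comp: "(\<And>m y. (gs m has_real_derivative gs (Suc m) y) (at y)) \<Longrightarrow> sm f \<Longrightarrow> sm (\<lambda>x. gs n (f x))"

lemma sm_deriv:
  assumes "sm f"
  shows "\<exists>F. (\<forall>x. (f has_derivative F x) (at x)) \<and> (\<forall>d. sm (\<lambda>x. F x d))"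
  using assms
proof induction
  case (sm_const c)
  show ?case by (rule exI[of _ "\<lambda>x h. 0"]) (auto intro: sm.sm_const)
next
  case (sm_inner b)
  show ?case
    by (rule exI[of _ "\<lambda>x h. h \<bullet> b"]) (auto intro!: derivative_eq_intros sm.sm_const)
next
  case sm_sq
  show ?case
  proof (rule exI[of _ "\<lambda>x h. x \<bullet> h + h \<bullet> x"], intro conjI allI)
    fix x :: 'a
    show "((\<lambda>x. x \<bullet> x) has_derivative (\<lambda>h. x \<bullet> h + h \<bullet> x)) (at x)"
      by (auto intro!: derivative_eq_intros)
  next
    fix d :: 'a
    have "(\<lambda>x. x \<bullet> d + d \<bullet> x) = (\<lambda>x. x \<bullet> d + x \<bullet> d)" by (simp add: inner_commute)
    then show "sm (\<lambda>x. x \<bullet> d + d \<bullet> x)" by (simp only:) (rule sm.sm_add[OF sm.sm_inner sm.sm_inner])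
  qed
next
  case (sm_add f g)
  then obtain F G where F: "\<forall>x. (f has_derivative F x) (at x)" "\<forall>d. sm (\<lambda>x. F x d)"
    and G: "\<forall>x. (g has_derivative G x) (at x)" "\<forall>d. sm (\<lambda>x. G x d)" by blast
  show ?case
    by (rule exI[of _ "\<lambda>x h. F x h + G x h"]) (use F G in \<open>auto intro!: has_derivative_add sm.sm_add\<close>)
next
  case (sm_mult f g)
  then obtain F G where F: "\<forall>x. (f has_derivative F x) (at x)" "\<forall>d. sm (\<lambda>x. F x d)"
    and G: "\<forall>x. (g has_derivative G x) (at x)" "\<forall>d. sm (\<lambda>x. G x d)" by blast
  show ?case
    by (rule exI[of _ "\<lambda>x h. f x * G x h + F x h * g x"])
      (use F G sm_mult in \<open>auto intro!: has_derivative_mult sm.sm_add sm.sm_mult\<close>)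
next
  case (sm_comp gs f n)
  then obtain F where F: "\<forall>x. (f has_derivative F x) (at x)" "\<forall>d. sm (\<lambda>x. F x d)" by blast
  show ?case
  proof (rule exI[of _ "\<lambda>x h. gs (Suc n) (f x) * F x h"], intro conjI allI)
    fix x
    have "(gs n has_derivative (\<lambda>h. gs (Suc n) (f x) * h)) (at (f x))"
      using sm_comp(1)[of n "f x"] by (simp add: has_field_derivative_def)
    then show "((\<lambda>x. gs n (f x)) has_derivative (\<lambda>h. gs (Suc n) (f x) * F x h)) (at x)"
      using has_derivative_compose[OF F(1)[rule_format, of x]] by blast
  next
    fix d
    show "sm (\<lambda>x. gs (Suc n) (f x) * F x d)"
      by (rule sm.sm_mult[OF sm.sm_comp[where gs=gs and n="Suc n", OF sm_comp(1) sm_comp(2)] F(2)[rule_format]])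
  qed
qed

lemma sm_differentiable: "sm f \<Longrightarrow> f differentiable (at x)"
  using sm_deriv unfolding differentiable_def by blast

lemma sm_cont: "sm f \<Longrightarrow> continuous_on UNIV f"
  by (meson continuous_at_imp_continuous_on differentiable_imp_continuous_within sm_differentiable)

lemma sm_fd: assumes "sm f" shows "sm (\<lambda>x. frechet_derivative f (at x) d)"
proof -
  obtain F where F: "\<forall>x. (f has_derivative F x) (at x)" "\<forall>d. sm (\<lambda>x. F x d)"
    using sm_deriv[OF assms] by blast
  have "(\<lambda>x. frechet_derivative f (at x) d) = (\<lambda>x. F x d)"
    using F(1) frechet_derivative_at by metis
  then show ?thesis using F(2) by simp
qed



primrec PP :: "nat \<Rightarrow> real poly" where
  "PP 0 = 1"
| "PP (Suc n) = [:0,0,1:] * (PP n - pderiv (PP n))"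

definition gsb :: "nat \<Rightarrow> real \<Rightarrow> real" where
  "gsb n s = (if s > 0 then poly (PP n) (inverse s) * exp (- inverse s) else 0)"

lemma poly_exp_lim: "((\<lambda>z::real. poly (Q::real poly) z * exp (- z)) \<longlongrightarrow> 0) at_top"
proof -
  have "((\<lambda>z. \<Sum>i\<le>degree Q. coeff Q i * (z ^ i / exp z)) \<longlongrightarrow> (\<Sum>i\<le>degree Q. coeff Q i * 0)) at_top"
    by (intro tendsto_sum tendsto_mult tendsto_const tendsto_power_div_exp_0)
  moreover have "(\<lambda>z. \<Sum>i\<le>degree Q. coeff Q i * (z ^ i / exp z)) = (\<lambda>z. poly Q z * exp (- z))"
    by (auto simp: poly_altdef sum_divide_distrib exp_minus field_simps)
  ultimately show ?thesis by simp
qed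

lemma gsb_deriv: "(gsb n has_real_derivative gsb (Suc n) y) (at y)"
proof (cases y "0::real" rule: linorder_cases)
  case less
  have "((\<lambda>s. 0) has_real_derivative 0) (at y)" by simp
  then have "(gsb n has_real_derivative 0) (at y)"
    by (rule has_field_derivative_transform_within_open[where S="{..<0}"]) (use less in \<open>auto simp: gsb_def\<close>)
  then show ?thesis using less by (simp add: gsb_def)
next
  case greater
  let ?h = "\<lambda>s. poly (PP n) (inverse s) * exp (- inverse s)"
  have "(?h has_real_derivative
     (poly (pderiv (PP n)) (inverse y) * (- inverse (y^2))) * exp (- inverse y)
     + poly (PP n) (inverse y) * (exp (- inverse y) * (inverse (y^2)))) (at y)"
    using greater
    by (auto intro!: derivative_eq_intros DERIV_chain2[OF poly_DERIV] simp: power2_eq_square)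
  moreover have "(poly (pderiv (PP n)) (inverse y) * (- inverse (y^2))) * exp (- inverse y)
     + poly (PP n) (inverse y) * (exp (- inverse y) * (inverse (y^2))) = gsb (Suc n) y"
    using greater by (simp add: gsb_def algebra_simps power2_eq_square)
  ultimately have "(?h has_real_derivative gsb (Suc n) y) (at y)" by simp
  then show ?thesis
    by (rule has_field_derivative_transform_within_open[where S="{0<..}"]) (use greater in \<open>auto simp: gsb_def\<close>)
next
  case equal
  have r: "((\<lambda>s. gsb n s / s) \<longlongrightarrow> 0) (at_right 0)"
  proof -
    have "((\<lambda>z. poly ([:0,1:] * PP n) z * exp (- z)) \<longlongrightarrow> 0) at_top" by (rule poly_exp_lim)
    then have "((\<lambda>s. poly ([:0,1:] * PP n) (inverse s) * exp (- inverse s)) \<longlongrightarrow> 0) (at_right 0)"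
      using filterlim_compose[OF _ filterlim_inverse_at_top_right] by blast
    moreover have "\<forall>\<^sub>F s in at_right 0. poly ([:0,1:] * PP n) (inverse s) * exp (- inverse s) = gsb n s / s"
      by (auto simp: gsb_def field_simps intro!: eventually_at_rightI[where b=1])
    ultimately show ?thesis by (rule Lim_transform_eventually)
  qed
  have l: "((\<lambda>s. gsb n s / s) \<longlongrightarrow> 0) (at_left 0)"
  proof -
    have "\<forall>\<^sub>F s in at_left (0::real). 0 = gsb n s / s"
      by (auto simp: gsb_def intro!: eventually_at_leftI[where a="-1"])
    then show ?thesis by (rule Lim_transform_eventually[OF tendsto_const])
  qed
  have "((\<lambda>s. gsb n s / s) \<longlongrightarrow> 0) (at 0)"
    using filterlim_split_at[OF l r] .
  then have "(gsb n has_real_derivative 0) (at 0)"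
    by (simp add: has_field_derivative_iff gsb_def)
  then show ?thesis using equal by (simp add: gsb_def)
qed



lemma cont_meas: "continuous_on UNIV (f::'a::euclidean_space \<Rightarrow> 'b::euclidean_space) \<Longrightarrow> f \<in> borel_measurable lebesgue"
  using continuous_imp_measurable_on measurable_on_imp_borel_measurable_lebesgue_UNIV by blast

lemma Lp_cont:
  fixes f :: "'a::euclidean_space \<Rightarrow> real"
  assumes f: "continuous_on UNIV f" and bd: "bounded \<Omega>" and op: "open \<Omega>"
    and pP: "\<forall>x\<in>\<Omega>. 0 < p x \<and> p x \<le> P"
  shows "in_Lp p \<Omega> f"
proof -
  have "compact (f ` closure \<Omega>)"
    using bd compact_closure compact_continuous_image continuous_on_subset[OF f] by blast
  then obtain B where B: "\<forall>y\<in>f ` closure \<Omega>. norm y \<le> B"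
    using compact_imp_bounded bounded_iff by blast
  have B': "\<forall>x\<in>\<Omega>. \<bar>f x\<bar> \<le> B" using B closure_subset by fastforce
  define M where "M = max 1 B powr P"
  have pt: "ennreal (\<bar>f x\<bar> powr p x) * indicator \<Omega> x \<le> ennreal M * indicator \<Omega> x" for x
  proof (cases "x \<in> \<Omega>")
    case True
    have "\<bar>f x\<bar> powr p x \<le> M"
    proof (cases "f x = 0")
      case True then show ?thesis by (simp add: M_def)
    next
      case False
      have "\<bar>f x\<bar> powr p x \<le> max 1 B powr p x"
        by (rule powr_mono2) (use True pP B' in auto)
      also have "\<dots> \<le> M" unfolding M_def
        by (rule powr_mono) (use True pP in auto)
      finally show ?thesis .
    qed
    then show ?thesis using True by (simp add: ennreal_leI)
  qed simp
  have sets: "\<Omega> \<in> sets lebesgue" using lmeasurable_open[OF bd op] by (simp add: fmeasurable_def)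
  have fin: "emeasure lebesgue \<Omega> < \<infinity>" using lmeasurable_open[OF bd op] unfolding fmeasurable_def by blast
  have "modular p \<Omega> f \<le> (\<integral>\<^sup>+x\<in>\<Omega>. ennreal M \<partial>lebesgue)"
    unfolding modular_def by (rule nn_integral_mono) (use pt in auto)
  also have "\<dots> = ennreal M * emeasure lebesgue \<Omega>" by (rule nn_integral_cmult_indicator[OF sets])
  also have "\<dots> < \<infinity>" using fin by (simp add: ennreal_mult_less_top)
  finally show ?thesis unfolding in_Lp_def using cont_meas[OF f] by simp
qed

lemma lux_zero: "lux_norm p \<Omega> (\<lambda>x. 0) = 0"
proof -
  have "{\<mu>. \<mu> > 0 \<and> modular p \<Omega> (\<lambda>x. 0 / \<mu>) \<le> 1} = {0<..}"
    by (auto simp: modular_def)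
  then show ?thesis unfolding lux_norm_def by simp
qed

lemma sm_test_fun: "sm f \<Longrightarrow> smooth_on UNIV f"
proof -
  assume "sm f"
  have "sm (dpart ds f)" for ds
    by (induction ds) (auto intro: sm_fd \<open>sm f\<close>)
  then show ?thesis unfolding smooth_on_def using sm_differentiable by blast
qed

lemma sm_grad_cont:
  assumes "sm f" shows "continuous_on UNIV (grad f)"
proof -
  have "continuous_on UNIV (\<lambda>x. \<Sum>i\<in>Basis. frechet_derivative f (at x) i *\<^sub>R i)"
    by (intro continuous_intros sm_cont sm_fd assms)
  then show ?thesis unfolding grad_def[abs_def] by simp
qed



lemma inner_sq_iff: fixes x c :: "'a::euclidean_space" shows "(0 < r^2 - (x - c) \<bullet> (x - c)) \<longleftrightarrow> norm (x - c) ^ 2 < r ^ 2"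
  unfolding power2_norm_eq_inner by linarith

lemma norm_sq_less_iff: fixes x c :: "'a::euclidean_space" assumes r: "r > 0"
  shows "norm (x - c) ^ 2 < r ^ 2 \<longleftrightarrow> norm (x - c) < r"
proof
  assume h: "norm (x - c) ^ 2 < r ^ 2"
  show "norm (x - c) < r"
  proof (rule ccontr)
    assume "\<not> norm (x - c) < r"
    then have "r ^ 2 \<le> norm (x - c) ^ 2" using r by (intro power_mono) auto
    with h show False by linarith
  qed
next
  assume "norm (x - c) < r" then show "norm (x - c) ^ 2 < r ^ 2"
    using power_strict_mono[of "norm (x - c)" r 2] by simp
qed

lemma ball_iff_norm: "x \<in> ball c r \<longleftrightarrow> norm (x - c) < r"
  by (simp add: dist_norm norm_minus_commute)

theorem proposition3:
  fixes \<Omega> :: "'a::euclidean_space set"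
    and p :: "'a \<Rightarrow> real" and \<alpha> :: real
    and A :: "'a \<Rightarrow> 'a \<Rightarrow> real" and a :: "'a \<Rightarrow> 'a \<Rightarrow> 'a"
    and c1 k \<beta> \<gamma> :: real
  assumes dim: "DIM('a) \<ge> 3"
    and dom: "smooth_bounded_domain \<Omega>"
    and alpha: "0 < \<alpha>" "\<alpha> < 1"
    and p_hoelder: "\<exists>C. \<forall>x\<in>closure \<Omega>. \<forall>y\<in>closure \<Omega>. \<bar>p x - p y\<bar> \<le> C * dist x y powr \<alpha>"
    and p_gt1: "\<forall>x\<in>closure \<Omega>. p x > 1"
    and A_deriv: "\<forall>x\<in>closure \<Omega>. \<forall>\<xi>. (A x has_derivative (\<lambda>h. a x \<xi> \<bullet> h)) (at \<xi>)"
    and a_cont: "continuous_on (closure \<Omega> \<times> UNIV) (\<lambda>(x, \<xi>). a x \<xi>)"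
    and A1: "\<forall>x\<in>closure \<Omega>. A x 0 = 0"
    and A2: "c1 > 0" "\<forall>x\<in>closure \<Omega>. \<forall>\<xi>. norm (a x \<xi>) \<le> c1 * (1 + norm \<xi> powr (p x - 1))"
    and A3: "\<forall>x\<in>closure \<Omega>. \<forall>\<xi> \<psi>. (a x \<xi> - a x \<psi>) \<bullet> (\<xi> - \<psi>) \<ge> 0 \<and>
               ((a x \<xi> - a x \<psi>) \<bullet> (\<xi> - \<psi>) = 0 \<longleftrightarrow> \<xi> = \<psi>)"
    and A4: "k > 0" "\<forall>x\<in>closure \<Omega>. \<forall>\<xi> \<psi>.
               A x ((\<xi> + \<psi>) /\<^sub>R 2) \<le> A x \<xi> / 2 + A x \<psi> / 2 - k * norm (\<xi> - \<psi>) powr p x"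
    and A5: "\<forall>x\<in>closure \<Omega>. \<forall>\<xi>. norm \<xi> powr p x \<le> a x \<xi> \<bullet> \<xi> \<and> a x \<xi> \<bullet> \<xi> \<le> p x * A x \<xi>"
    and exps: "1 < \<beta>" "\<beta> < \<gamma>" "\<gamma> < Inf (p ` \<Omega>)"
  shows "\<exists>lam_star>0. \<forall>lam\<ge>lam_star. \<exists>u g. in_E p \<Omega> u g \<and> I_fun A \<Omega> \<beta> \<gamma> lam u g < 0"
proof -
  from dom have ne: "\<Omega> \<noteq> {}" and op: "open \<Omega>" and bd: "bounded \<Omega>"
    unfolding smooth_bounded_domain_def by auto
  obtain c r where r: "r > 0" "cball c r \<subseteq> \<Omega>" using open_contains_cball ne op by blast
  obtain C where C: "\<forall>x\<in>closure \<Omega>. \<forall>y\<in>closure \<Omega>. \<bar>p x - p y\<bar> \<le> C * dist x y powr \<alpha>"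
    using p_hoelder by blast
  obtain y0 where y0: "y0 \<in> \<Omega>" using ne by blast
  obtain D where D: "\<forall>y\<in>\<Omega>. dist y0 y \<le> D" using bd unfolding bounded_any_center[where a=y0] by blast
  define P where "P = p y0 + \<bar>C\<bar> * D powr \<alpha>"
  have pP: "\<forall>x\<in>\<Omega>. 0 < p x \<and> p x \<le> P"
  proof
    fix x assume x: "x \<in> \<Omega>"
    have xc: "x \<in> closure \<Omega>" "y0 \<in> closure \<Omega>" using closure_subset x y0 by auto
    then have "\<bar>p x - p y0\<bar> \<le> C * dist x y0 powr \<alpha>" using C by blast
    then have "p x - p y0 \<le> C * dist x y0 powr \<alpha>" by linarith
    also have "\<dots> \<le> \<bar>C\<bar> * dist x y0 powr \<alpha>" by (intro mult_right_mono) auto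
    also have "\<dots> \<le> \<bar>C\<bar> * D powr \<alpha>"
      using D x alpha by (intro mult_left_mono powr_mono2) (auto simp: dist_commute)
    finally have "p x \<le> P" unfolding P_def by simp
    moreover have "p x > 0" using p_gt1 xc by auto
    ultimately show "0 < p x \<and> p x \<le> P" by simp
  qed
  have sets: "\<Omega> \<in> sets lebesgue" using lmeasurable_open[OF bd op] by (simp add: fmeasurable_def)
  have fin: "emeasure lebesgue \<Omega> < \<infinity>" using lmeasurable_open[OF bd op] unfolding fmeasurable_def by blast
  define \<phi> where "\<phi> = (\<lambda>x. gsb 0 (r^2 - (x - c) \<bullet> (x - c)))"
  have inner_sm: "sm (\<lambda>x. r^2 - (x - c) \<bullet> (x - c))"
  proof -
    have "(\<lambda>x. r^2 - (x - c) \<bullet> (x - c)) = (\<lambda>x. (r^2 - c \<bullet> c) + ((x \<bullet> x) * (-1) + (x \<bullet> c) * 2))"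
      by (auto simp: inner_diff_left inner_diff_right inner_commute algebra_simps)
    moreover have "sm (\<lambda>x. (r^2 - c \<bullet> c) + ((x \<bullet> x) * (-1) + (x \<bullet> c) * 2))"
      by (intro sm.sm_add sm.sm_const sm.sm_mult sm.sm_sq sm.sm_inner)
    ultimately show ?thesis by simp
  qed
  have sm_phi: "sm \<phi>" unfolding \<phi>_def
    by (rule sm_comp[where gs=gsb, OF gsb_deriv inner_sm])
  have phi_eq: "\<phi> x = (if x \<in> ball c r then exp (- inverse (r^2 - (x - c) \<bullet> (x - c))) else 0)" for x
  proof -
    have "(0 < r^2 - (x - c) \<bullet> (x - c)) \<longleftrightarrow> x \<in> ball c r"
      using inner_sq_iff[of r x c] norm_sq_less_iff[OF r(1), of x c] ball_iff_norm[of x c r] by blast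
    then show ?thesis unfolding \<phi>_def gsb_def by simp
  qed
  have phi_nn: "0 \<le> \<phi> x" for x by (simp add: phi_eq)
  have phi_le1: "\<phi> x \<le> 1" for x
    unfolding \<phi>_def gsb_def by simp
  have sm_u: "sm (\<lambda>x. t * \<phi> x)" for t by (rule sm.sm_mult[OF sm.sm_const sm_phi])
  have inE: "in_E p \<Omega> (\<lambda>x. t * \<phi> x) (grad (\<lambda>x. t * \<phi> x))" if t: "t > 0" for t
  proof -
    let ?u = "\<lambda>x. t * \<phi> x"
    have cu: "continuous_on UNIV ?u" by (rule sm_cont[OF sm_u])
    have cg: "continuous_on UNIV (grad ?u)" by (rule sm_grad_cont[OF sm_u])
    have supp: "{x. ?u x \<noteq> 0} = ball c r" using t by (auto simp: phi_eq)
    have tf: "test_fun \<Omega> ?u" unfolding test_fun_def supp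
      using sm_test_fun[OF sm_u] r by (simp add: closure_ball)
    have l1: "in_Lp p \<Omega> ?u" by (rule Lp_cont[OF cu bd op pP])
    have l2: "in_Lp p \<Omega> (\<lambda>x. norm (grad ?u x))"
      by (rule Lp_cont[OF continuous_on_norm[OF cg] bd op pP])
    have m: "grad ?u \<in> borel_measurable lebesgue" by (rule cont_meas[OF cg])
    show ?thesis unfolding in_E_def
      using l1 l2 m tf by (intro conjI exI[of _ "\<lambda>k. ?u"]) (auto simp: lux_zero)
  qed
  have phimeas: "\<phi> \<in> borel_measurable lebesgue" by (rule cont_meas[OF sm_cont[OF sm_phi]])
  define J where "J s = (LINT x:\<Omega>|lebesgue. \<phi> x powr s)" for s
  have scale: "(LINT x:\<Omega>|lebesgue. (max (t * \<phi> x) 0) powr s) = t powr s * J s" if "t > 0" for t s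
  proof -
    have "(\<lambda>x. indicator \<Omega> x *\<^sub>R (max (t * \<phi> x) 0) powr s) = (\<lambda>x. t powr s * (indicator \<Omega> x *\<^sub>R \<phi> x powr s))"
    proof
      fix x
      have "max (t * \<phi> x) 0 = t * \<phi> x" using phi_nn[of x] that by simp
      then show "indicator \<Omega> x *\<^sub>R (max (t * \<phi> x) 0) powr s = t powr s * (indicator \<Omega> x *\<^sub>R \<phi> x powr s)"
        using phi_nn[of x] that by (simp add: powr_mult)
    qed
    then show ?thesis unfolding set_lebesgue_integral_def J_def by simp
  qed
  have intJ: "integrable lebesgue (\<lambda>x. indicator \<Omega> x *\<^sub>R \<phi> x powr s)" if "s \<ge> 0" for s
  proof (rule integrableI_bounded_set[where A=\<Omega> and B=1])
    show "\<Omega> \<in> sets lebesgue" by (rule sets)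
    show "emeasure lebesgue \<Omega> < \<infinity>" by (rule fin)
    show "(\<lambda>x. indicator \<Omega> x *\<^sub>R \<phi> x powr s) \<in> borel_measurable lebesgue"
      using sets phimeas by (intro borel_measurable_scaleR borel_measurable_indicator powr_real_measurable) auto
    have h: "\<phi> x powr s \<le> 1" for x
    proof -
      have "\<phi> x powr s \<le> 1 powr s" by (rule powr_mono2) (use that phi_nn phi_le1 in auto)
      then show ?thesis by simp
    qed
    have "norm (indicator \<Omega> x *\<^sub>R \<phi> x powr s) \<le> 1" if "x \<in> \<Omega>" for x
      using h[of x] that phi_nn[of x] by simp
    then show "AE x\<in>\<Omega> in lebesgue. norm (indicator \<Omega> x *\<^sub>R \<phi> x powr s) \<le> 1"
      by (intro AE_I2 impI) simp
    show "AE x in lebesgue. x \<notin> \<Omega> \<longrightarrow> indicator \<Omega> x *\<^sub>R \<phi> x powr s = 0" by simp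
  qed
  have Jnn: "0 \<le> J s" for s unfolding J_def set_lebesgue_integral_def
    by (rule Bochner_Integration.integral_nonneg) (simp add: phi_nn)
  have Jpos: "0 < J s" if s: "s \<ge> 0" for s
  proof -
    define \<delta> where "\<delta> = exp (- inverse (3/4 * r^2))"
    have dpos: "\<delta> > 0" unfolding \<delta>_def by simp
    have low: "indicator (ball c (r/2)) x * \<delta> powr s \<le> indicator \<Omega> x *\<^sub>R \<phi> x powr s" for x
    proof (cases "x \<in> ball c (r/2)")
      case True
      then have nx: "norm (x - c) < r/2" using ball_iff_norm by blast
      then have "norm (x - c) ^ 2 < (r/2) ^ 2" by (intro power_strict_mono) auto
      then have v: "3/4 * r^2 < r^2 - (x - c) \<bullet> (x - c)"
        unfolding power2_norm_eq_inner by (simp add: power_divide)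
      have xb: "x \<in> ball c r" using nx r(1) ball_iff_norm by fastforce
      then have xo: "x \<in> \<Omega>" using r(2) by auto
      have "inverse (r^2 - (x - c) \<bullet> (x - c)) \<le> inverse (3/4 * r^2)"
        using v r(1) by (intro le_imp_inverse_le) auto
      then have "\<delta> \<le> \<phi> x" unfolding \<delta>_def using xb by (simp add: phi_eq)
      then have "\<delta> powr s \<le> \<phi> x powr s" using dpos s by (intro powr_mono2) auto
      then show ?thesis using True xo by simp
    next
      case False
      then show ?thesis using phi_nn by (simp add: indicator_def)
    qed
    have bs: "ball c (r/2) \<in> sets lebesgue" "emeasure lebesgue (ball c (r/2)) < \<infinity>"
      using lmeasurable_ball[of c "r/2"] unfolding fmeasurable_def by blast+
    have ib: "integrable lebesgue (\<lambda>x. indicator (ball c (r/2)) x * \<delta> powr s)"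
      using bs by (intro integrable_mult_left integrable_real_indicator) auto
    have "0 < measure lborel (ball c (r/2))" using content_ball_gt_0_iff r(1) by simp
    then have mpos: "0 < measure lebesgue (ball c (r/2))" by simp
    have "(LINT x|lebesgue. indicator (ball c (r/2)) x * \<delta> powr s) = measure lebesgue (ball c (r/2)) * \<delta> powr s"
      by simp
    also have "\<dots> > 0" using mpos dpos by simp
    finally have "0 < (LINT x|lebesgue. indicator (ball c (r/2)) x * \<delta> powr s)" .
    also have "\<dots> \<le> (LINT x|lebesgue. indicator \<Omega> x *\<^sub>R \<phi> x powr s)"
      by (rule integral_mono[OF ib intJ[OF s] low])
    finally show ?thesis unfolding J_def set_lebesgue_integral_def .
  qed
  have gb: "0 < \<beta>" "0 < \<gamma>" "\<beta> < \<gamma>" using exps by auto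
  define a where "a = J \<gamma>"
  define b where "b = J \<beta>"
  have apos: "0 < a" unfolding a_def using Jpos gb by auto
  have bnn: "0 \<le> b" unfolding b_def using Jnn by auto
  define t where "t = (b * \<gamma> / (a * \<beta>) + 1) powr (1 / (\<gamma> - \<beta>))"
  have base: "0 < b * \<gamma> / (a * \<beta>) + 1" using apos bnn gb by (simp add: add_nonneg_pos)
  have tpos: "t > 0" unfolding t_def using base by simp
  have tpow: "t powr (\<gamma> - \<beta>) = b * \<gamma> / (a * \<beta>) + 1"
    unfolding t_def using base gb by (simp add: powr_powr)
  have tg: "t powr \<gamma> = t powr \<beta> * t powr (\<gamma> - \<beta>)"
    by (simp add: powr_add[symmetric])
  define Dv where "Dv = t powr \<gamma> * a / \<gamma> - t powr \<beta> * b / \<beta>"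
  have "Dv = t powr \<beta> * (a / \<gamma>)"
    unfolding Dv_def tg tpow using apos gb by (simp add: field_simps)
  then have Dpos: "Dv > 0" using tpos apos gb by simp
  define u where "u = (\<lambda>x. t * \<phi> x)"
  define X where "X = (LINT x:\<Omega>|lebesgue. A x (grad u x))"
  have Ieq: "I_fun A \<Omega> \<beta> \<gamma> lam u (grad u) = X - lam * Dv" for lam
    unfolding I_fun_def X_def[symmetric] u_def scale[OF tpos] Dv_def a_def[symmetric] b_def[symmetric]
    using gb by (simp add: field_simps X_def u_def)
  have uE: "in_E p \<Omega> u (grad u)" unfolding u_def by (rule inE[OF tpos])
  show ?thesis
  proof (intro exI[of _ "max 1 ((\<bar>X\<bar> + 1) / Dv)"] conjI allI impI)
    show "0 < max 1 ((\<bar>X\<bar> + 1) / Dv)" by simp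
    fix lam assume "max 1 ((\<bar>X\<bar> + 1) / Dv) \<le> lam"
    then have "(\<bar>X\<bar> + 1) / Dv \<le> lam" by simp
    then have "\<bar>X\<bar> + 1 \<le> lam * Dv" using Dpos by (simp add: pos_divide_le_eq)
    then have "I_fun A \<Omega> \<beta> \<gamma> lam u (grad u) < 0" unfolding Ieq by linarith
    then show "\<exists>u g. in_E p \<Omega> u g \<and> I_fun A \<Omega> \<beta> \<gamma> lam u g < 0" using uE by blast
  qed
qed

end
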